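(* Let $n\ge2$ and let $\mathbb{K}$ be a field with $\operatorname{char}\mathbb{K}$ either $0$ or coprime to both $n$ and $n-1$. Let $A_n=\mathbb{K}[x,y]/(y^{2n+3},\, x^ny^2-y^{n+2},\, x^{2n+1}-xy^{n+1})$ with maximal ideal $\mathfrak{m}_n=(x,y)$ and socle $\operatorname{Soc}A_n$. Let $U_1,U_2\subseteq\mathfrak{m}_n$ be complementary hyperplanes such that $y^{2n+1}\in U_1$ and $y^{2n+1}\notin U_2$. Then there is no $\phi\in\operatorname{Aut}(A_n)$ with $\phi(U_1)=U_2$.
   Context: For a finite-dimensional local algebra $A$ with maximal ideal $\mathfrak{m}$, the socle is $\operatorname{Soc}A=\{s\in A\mid s\mathfrak{m}=0\}$; $A$ is Gorenstein if $\dim\operatorname{Soc}A=1$. For Gorenstein $A$, a complementary hyperplane is a linear subspace $U\subseteq\mathfrak{m}$ with $\mathfrak{m}=U\oplus\operatorname{Soc}A$. (For $A_n$ one has $\operatorname{Soc}A_n=\langle y^{2n+2}\rangle$.) $\operatorname{Aut}(A_n)$ is the group of $\mathbb{K}$-algebra automorphisms of $A_n$. *)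

theory Defs
  imports "HOL-Computational_Algebra.Polynomial"
begin

text \<open>K[x,y] is modelled as ('a poly) poly: the outer variable is y, the inner one is x.
  The algebra A_n = K[x,y]/I_n is modelled through preimages: a K-subspace of A_n is
  the same as a K-subspace of K[x,y] containing I_n, and a K-algebra automorphism of
  A_n is the same as (the class of) a map K[x,y] -> K[x,y] inducing a bijective
  K-algebra endomorphism of the quotient.\<close>

definition cst :: "'a::field \<Rightarrow> 'a poly poly" where
  "cst c = [:[:c:]:]"

definition Xv :: "'a::field poly poly" where
  "Xv = [:[:0, 1:]:]"

definition Yv :: "'a::field poly poly" where
  "Yv = [:0, 1:]"

definition In :: "nat \<Rightarrow> 'a::field poly poly set" where
  "In n = {a * Yv ^ (2*n+3) + b * (Xv ^ n * Yv ^ 2 - Yv ^ (n+2))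
             + c * (Xv ^ (2*n+1) - Xv * Yv ^ (n+1)) | a b c. True}"

definition mpre :: "'a::field poly poly set" where
  "mpre = {a * Xv + b * Yv | a b. True}"

definition socpre :: "nat \<Rightarrow> 'a::field poly poly set" where
  "socpre n = {s. \<forall>t\<in>mpre. s * t \<in> In n}"

definition lin_subspace :: "'a::field poly poly set \<Rightarrow> bool" where
  "lin_subspace U \<longleftrightarrow> 0 \<in> U \<and> (\<forall>u\<in>U. \<forall>v\<in>U. u + v \<in> U)
     \<and> (\<forall>c. \<forall>u\<in>U. cst c * u \<in> U)"

definition compl_hyperplane :: "nat \<Rightarrow> 'a::field poly poly set \<Rightarrow> bool" where
  "compl_hyperplane n U \<longleftrightarrow> lin_subspace U \<and> In n \<subseteq> U \<and> U \<subseteq> mpre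
     \<and> {u + s | u s. u \<in> U \<and> s \<in> socpre n} = mpre
     \<and> U \<inter> socpre n \<subseteq> In n"

definition induces_aut :: "nat \<Rightarrow> ('a::field poly poly \<Rightarrow> 'a poly poly) \<Rightarrow> bool" where
  "induces_aut n f \<longleftrightarrow>
     (\<forall>p q. p - q \<in> In n \<longrightarrow> f p - f q \<in> In n)
   \<and> (\<forall>p q. f (p + q) - (f p + f q) \<in> In n)
   \<and> (\<forall>p q. f (p * q) - f p * f q \<in> In n)
   \<and> (\<forall>c p. f (cst c * p) - cst c * f p \<in> In n)
   \<and> f 1 - 1 \<in> In n
   \<and> (\<forall>p q. f p - f q \<in> In n \<longrightarrow> p - q \<in> In n)
   \<and> (\<forall>q. \<exists>p. f p - q \<in> In n)"

definition maps_onto :: "nat \<Rightarrow> ('a::field poly poly \<Rightarrow> 'a poly poly)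
     \<Rightarrow> 'a poly poly set \<Rightarrow> 'a poly poly set \<Rightarrow> bool" where
  "maps_onto n f U1 U2 \<longleftrightarrow> (\<forall>u\<in>U1. f u \<in> U2) \<and> (\<forall>v\<in>U2. \<exists>u\<in>U1. f u - v \<in> In n)"

end

theory Submission
  imports Defs
begin

definition cf :: "'a::field poly poly \<Rightarrow> nat \<Rightarrow> nat \<Rightarrow> 'a" where
  "cf p i j = coeff (coeff p j) i"

lemma cf_add[simp]: "cf (p + q) i j = cf p i j + cf q i j"
  by (simp add: cf_def)
lemma cf_diff[simp]: "cf (p - q) i j = cf p i j - cf q i j"
  by (simp add: cf_def)
lemma cf_minus[simp]: "cf (- p) i j = - cf p i j"
  by (simp add: cf_def)
lemma cf_0[simp]: "cf 0 i j = 0"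
  by (simp add: cf_def)

lemma const_mult_poly: "[:a:] * p = smult a p"
  by (simp add: mult_pCons_left)

lemma Xv_pow: "(Xv::'a::field poly poly) ^ k = [:monom 1 k:]"
  by (simp add: Xv_def poly_const_pow monom_altdef)
lemma Yv_pow: "(Yv::'a::field poly poly) ^ k = monom 1 k"
  by (simp add: Yv_def monom_altdef)

lemma cf_Xpow_mult[simp]: "cf (Xv ^ k * p) i j = (if k \<le> i then cf p (i - k) j else 0)"
  by (simp add: cf_def Xv_pow const_mult_poly coeff_monom_mult)
lemma cf_Ypow_mult[simp]: "cf (Yv ^ k * p) i j = (if k \<le> j then cf p i (j - k) else 0)"
  by (simp add: cf_def Yv_pow coeff_monom_mult)
lemma cf_X_mult[simp]: "cf (Xv * p) i j = (if 1 \<le> i then cf p (i - 1) j else 0)"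
  using cf_Xpow_mult[of 1 p i j] by simp
lemma cf_Y_mult[simp]: "cf (Yv * p) i j = (if 1 \<le> j then cf p i (j - 1) else 0)"
  using cf_Ypow_mult[of 1 p i j] by simp
lemma cf_cst_mult[simp]: "cf (cst c * p) i j = c * cf p i j"
  by (simp add: cf_def cst_def const_mult_poly coeff_smult)
lemma cf_cst[simp]: "cf (cst c) i j = (if i = 0 \<and> j = 0 then c else 0)"
  by (simp add: cf_def cst_def coeff_pCons split: nat.split)
lemma cf_1[simp]: "cf 1 i j = (if i = 0 \<and> j = 0 then 1 else 0)"
  using cf_cst[of 1 i j] by (simp add: cst_def pCons_one)

lemma cst_mult: "cst (a * b) = cst a * cst b"
  by (simp add: cst_def)
lemma cst_pow: "cst (a ^ k) = cst a ^ k"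
  by (simp add: cst_def poly_const_pow)
lemma cst_0[simp]: "cst 0 = 0" by (simp add: cst_def)
lemma cst_1[simp]: "cst 1 = 1" by (simp add: cst_def pCons_one)

definition ev0 :: "'a::field poly poly \<Rightarrow> 'a" where "ev0 p = cf p 0 0"
definition D :: "'a::field poly poly \<Rightarrow> 'a" where "D p = cf p 0 1"

lemma ev0_diff: "ev0 (p - q) = ev0 p - ev0 q"
  by (simp add: ev0_def)

lemma ev0_mult: "ev0 (p * q) = ev0 p * ev0 q"
  by (simp add: ev0_def cf_def coeff_mult_0)

lemma coeff_mult_1: "coeff (p * q) (Suc 0) = coeff p 0 * coeff q 1 + coeff p 1 * coeff q 0"
  by (simp add: coeff_mult atMost_Suc algebra_simps)

lemma D_mult: "D (p * q) = D p * ev0 q + ev0 p * D q"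
  by (simp add: D_def ev0_def cf_def coeff_mult_1[of p q] coeff_mult_0 algebra_simps)

lemma ev0_pow: "ev0 (p ^ k) = ev0 p ^ k"
  by (induction k) (simp_all add: ev0_mult, simp add: ev0_def)

lemma D_pow: "D (p ^ k) = of_nat k * ev0 p ^ (k - 1) * D p"
proof (induction k)
  case 0 then show ?case by (simp add: D_def)
next
  case (Suc k)
  show ?case
  proof (cases k)
    case 0 then show ?thesis by simp
  next
    case (Suc m)
    show ?thesis using Suc.IH Suc by (simp add: D_mult ev0_pow ev0_mult algebra_simps)
  qed
qed

lemma cf_mult: "cf (p * q) i j = (\<Sum>l\<le>j. \<Sum>k\<le>i. cf p k l * cf q (i - k) (j - l))"
  by (simp add: cf_def coeff_mult coeff_sum)

definition wo :: "nat \<Rightarrow> nat \<Rightarrow> nat \<Rightarrow> 'a::field poly poly \<Rightarrow> bool" where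
  "wo a b T p \<longleftrightarrow> (\<forall>i j. cf p i j \<noteq> 0 \<longrightarrow> T \<le> a*i + b*j)"

lemma wo_cf: "wo a b T p \<Longrightarrow> a*i + b*j < T \<Longrightarrow> cf p i j = 0"
  unfolding wo_def by force

lemma wo_0[simp]: "wo a b T 0" by (simp add: wo_def)
lemma wo_zero_T[simp]: "wo a b 0 p" by (simp add: wo_def)

lemma wo_mono: "wo a b T p \<Longrightarrow> T' \<le> T \<Longrightarrow> wo a b T' p"
  unfolding wo_def by force

lemma wo_add: "wo a b T p \<Longrightarrow> wo a b T q \<Longrightarrow> wo a b T (p + q)"
  unfolding wo_def by (metis add.right_neutral cf_add)
lemma wo_diff: "wo a b T p \<Longrightarrow> wo a b T q \<Longrightarrow> wo a b T (p - q)"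
  unfolding wo_def by (metis cf_diff diff_self diff_zero)
lemma wo_uminus: "wo a b T p \<Longrightarrow> wo a b T (- p)"
  unfolding wo_def by simp

lemma wo_mult: assumes "wo a b T1 p" "wo a b T2 q" shows "wo a b (T1 + T2) (p * q)"
  unfolding wo_def
proof (intro allI impI)
  fix i j assume "cf (p * q) i j \<noteq> 0"
  then have "(\<Sum>l\<le>j. \<Sum>k\<le>i. cf p k l * cf q (i - k) (j - l)) \<noteq> 0" by (simp add: cf_mult)
  then obtain l where l: "l \<le> j" "(\<Sum>k\<le>i. cf p k l * cf q (i - k) (j - l)) \<noteq> 0"
    by (meson atMost_iff sum.not_neutral_contains_not_neutral)
  then obtain k where k: "k \<le> i" "cf p k l * cf q (i - k) (j - l) \<noteq> 0"
    by (meson atMost_iff sum.not_neutral_contains_not_neutral)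
  then have "T1 \<le> a*k + b*l" "T2 \<le> a*(i-k) + b*(j-l)"
    using assms unfolding wo_def by auto
  moreover have "a*k + a*(i-k) = a*i" "b*l + b*(j-l) = b*j"
    using k l by (simp_all add: add_mult_distrib2[symmetric])
  ultimately show "T1 + T2 \<le> a*i + b*j" by linarith
qed

lemma wo_pow: "wo a b T p \<Longrightarrow> wo a b (k*T) (p ^ k)"
proof (induction k)
  case 0 then show ?case by simp
next
  case (Suc k) then show ?case using wo_mult[of a b T p "k*T" "p^k"] by simp
qed

lemma wo_sum: "(\<And>x. x \<in> A \<Longrightarrow> wo a b T (f x)) \<Longrightarrow> wo a b T (\<Sum>x\<in>A. f x)"
proof (induction A rule: infinite_finite_induct)
  case (insert x F) then show ?case by (simp add: wo_add)
qed simp_all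

lemma cf_Xv[simp]: "cf Xv i j = (if i = 1 \<and> j = 0 then 1 else 0)"
  using cf_X_mult[of 1 i j] by auto
lemma cf_Yv[simp]: "cf Yv i j = (if i = 0 \<and> j = 1 then 1 else 0)"
  using cf_Y_mult[of 1 i j] by auto
lemma wo_X: "wo a b a Xv"
  unfolding wo_def by simp
lemma wo_Y: "wo a b b Yv"
  unfolding wo_def by simp
lemma wo_cst_mult: "wo a b T p \<Longrightarrow> wo a b T (cst c * p)"
  unfolding wo_def by simp

lemma wo_pow_diff:
  assumes "wo a b T p" "wo a b T q" "wo a b T2 (p - q)"
  shows "wo a b (T2 + (m - 1) * T) (p ^ m - q ^ m)"
proof (cases m)
  case 0 then show ?thesis by simp
next
  case (Suc k)
  have "p ^ m - q ^ m = (p - q) * (\<Sum>i<m. q ^ (m - Suc i) * p ^ i)"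
    by (rule power_diff_sumr2)
  moreover have "wo a b ((m - 1) * T) (\<Sum>i<m. q ^ (m - Suc i) * p ^ i)"
  proof (rule wo_sum)
    fix i assume "i \<in> {..<m}"
    then have "(m - Suc i) * T + i * T = (m - 1) * T"
      by (simp add: add_mult_distrib[symmetric])
    then show "wo a b ((m - 1) * T) (q ^ (m - Suc i) * p ^ i)"
      using wo_mult[OF wo_pow[OF assms(2), of "m - Suc i"] wo_pow[OF assms(1), of i]] by simp
  qed
  ultimately show ?thesis using wo_mult[OF assms(3)] by simp
qed


lemma pw1: "N = m + k \<Longrightarrow> (x::'b::monoid_mult) ^ N = x^m * x^k" by (simp add: power_add)
lemma pw2: "N = m + m + k \<Longrightarrow> (x::'b::monoid_mult) ^ N = x^m * x^m * x^k" by (simp add: power_add)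
lemma pw3: "N = m + m + m + k \<Longrightarrow> (x::'b::monoid_mult) ^ N = x^m * x^m * x^m * x^k" by (simp add: power_add)

lemma idXY: fixes X Y :: "'b::comm_ring_1" assumes "n \<ge> 2"
  shows "X*Y^(n+3) = ((X^(n+1) + X*Y^n)*(X^n*Y^2 - Y^(n+2)) - Y^2*(X^(2*n+1) - X*Y^(n+1)))*(1 + Y^(n-1)) + X*Y^(n-2)*Y^(2*n+3)"
proof -
  obtain m where n: "n = m + 2" using assms by (metis add.commute le_Suc_ex)
  show ?thesis
    apply (subst pw1[of "n+3" m 5], simp add: n)
    apply (subst pw1[of "n+1" m 3 X], simp add: n)
    apply (subst pw1[of "n" m 2 Y], simp add: n)
    apply (subst pw1[of "n" m 2 X], simp add: n)
    apply (subst pw1[of "n+2" m 4 Y], simp add: n)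
    apply (subst pw2[of "2*n+1" m 5 X], simp add: n)
    apply (subst pw1[of "n+1" m 3 Y], simp add: n)
    apply (subst pw1[of "n-1" m 1 Y], simp add: n)
    apply (subst pw1[of "n-2" m 0 Y], simp add: n)
    apply (subst pw2[of "2*n+3" m 7 Y], simp add: n)
    by (simp add: algebra_simps eval_nat_numeral)
qed

lemma idX3Y: fixes X Y :: "'b::comm_ring_1"
  shows "X^(n+1)*Y^3 = X*Y^(n+3) + X*Y*(X^n*Y^2 - Y^(n+2))"
  by (simp add: algebra_simps power_add eval_nat_numeral)

lemma idX: fixes X Y :: "'b::comm_ring_1" assumes "n \<ge> 2"
  shows "X^(3*n+1) = X^n*(X^(2*n+1) - X*Y^(n+1)) + X*Y^(n-1)*(X^n*Y^2 - Y^(n+2)) + Y^(n-2)*(X*Y^(n+3))"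
proof -
  obtain m where n: "n = m + 2" using assms by (metis add.commute le_Suc_ex)
  have e: "X^(3*n+1) = X^m*X^m*X^m*X^7" "Y^(n+3) = Y^m*Y^5" "X^n = X^m*X^2" "Y^n = Y^m*Y^2"
    "Y^(n+2) = Y^m*Y^4" "X^(2*n+1) = X^m*X^m*X^5" "Y^(n+1) = Y^m*Y^3" "Y^(n-1) = Y^m*Y" "Y^(n-2) = Y^m"
    by (rule pw3, simp add: n, (rule pw1, simp add: n)+, rule pw2, simp add: n, (rule pw1, simp add: n)+, simp_all add: n)
  show ?thesis unfolding e by (simp add: algebra_simps eval_nat_numeral)
qed

lemma In_add: assumes "p \<in> In n" "q \<in> In n" shows "p + q \<in> In n"
proof -
  obtain a b c where p: "p = a * Yv ^ (2*n+3) + b * (Xv^n * Yv^2 - Yv^(n+2)) + c * (Xv^(2*n+1) - Xv * Yv^(n+1))"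
    using assms(1) unfolding In_def by blast
  obtain a' b' c' where q: "q = a' * Yv ^ (2*n+3) + b' * (Xv^n * Yv^2 - Yv^(n+2)) + c' * (Xv^(2*n+1) - Xv * Yv^(n+1))"
    using assms(2) unfolding In_def by blast
  have "p + q = (a+a') * Yv ^ (2*n+3) + (b+b') * (Xv^n * Yv^2 - Yv^(n+2)) + (c+c') * (Xv^(2*n+1) - Xv * Yv^(n+1))"
    unfolding p q by (simp add: algebra_simps)
  then show ?thesis unfolding In_def by blast
qed

lemma In_mult: assumes "p \<in> In n" shows "h * p \<in> In n"
proof -
  obtain a b c where p: "p = a * Yv ^ (2*n+3) + b * (Xv^n * Yv^2 - Yv^(n+2)) + c * (Xv^(2*n+1) - Xv * Yv^(n+1))"
    using assms(1) unfolding In_def by blast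
  have "h * p = (h*a) * Yv ^ (2*n+3) + (h*b) * (Xv^n * Yv^2 - Yv^(n+2)) + (h*c) * (Xv^(2*n+1) - Xv * Yv^(n+1))"
    unfolding p by (simp add: algebra_simps)
  then show ?thesis unfolding In_def by blast
qed

lemma In_mult2: "p \<in> In n \<Longrightarrow> p * h \<in> In n"
  using In_mult[of p n h] by (simp add: mult.commute)

lemma In_0: "0 \<in> In n"
  unfolding In_def by (rule CollectI, rule exI[of _ 0], rule exI[of _ 0], rule exI[of _ 0]) simp

lemma In_uminus: "p \<in> In n \<Longrightarrow> - p \<in> In n"
  using In_mult[of p n "-1"] by simp

lemma In_diff: "p \<in> In n \<Longrightarrow> q \<in> In n \<Longrightarrow> p - q \<in> In n"
  using In_add[OF _ In_uminus] by (metis diff_conv_add_uminus)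

lemma In_sum: "(\<And>x. x \<in> A \<Longrightarrow> f x \<in> In n) \<Longrightarrow> (\<Sum>x\<in>A. f x) \<in> In n"
proof (induction A rule: infinite_finite_induct)
  case (insert x F) then show ?case by (simp add: In_add)
qed (simp_all add: In_0)

lemma In_g1: "Yv ^ (2*n+3) \<in> In n"
  unfolding In_def by (rule CollectI, rule exI[of _ 1], rule exI[of _ 0], rule exI[of _ 0]) simp
lemma In_g2: "Xv^n * Yv^2 - Yv^(n+2) \<in> In n"
  unfolding In_def by (rule CollectI, rule exI[of _ 0], rule exI[of _ 1], rule exI[of _ 0]) simp
lemma In_g3: "Xv^(2*n+1) - Xv * Yv^(n+1) \<in> In n"
  unfolding In_def by (rule CollectI, rule exI[of _ 0], rule exI[of _ 0], rule exI[of _ 1]) simp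

lemma In_XY: "n \<ge> 2 \<Longrightarrow> Xv * Yv^(n+3) \<in> In n"
  apply (subst idXY[of n], assumption)
  by (rule In_add[OF In_mult2[OF In_diff[OF In_mult[OF In_g2] In_mult[OF In_g3]]] In_mult[OF In_g1]])

lemma In_X3Y: "n \<ge> 2 \<Longrightarrow> Xv^(n+1) * Yv^3 \<in> In n"
  apply (subst idX3Y)
  by (rule In_add[OF In_XY In_mult[OF In_g2]])

lemma In_X: "n \<ge> 2 \<Longrightarrow> Xv^(3*n+1) \<in> In n"
  apply (subst idX[of n], assumption)
  by (rule In_add[OF In_add[OF In_mult[OF In_g3] In_mult[OF In_g2]] In_mult[OF In_XY]])

definition Zc :: "nat \<Rightarrow> nat \<Rightarrow> nat \<Rightarrow> bool" where
  "Zc n i j \<longleftrightarrow> j \<ge> 2*n+3 \<or> (i \<ge> 1 \<and> j \<ge> n+3) \<or> i \<ge> 3*n+1 \<or> (i \<ge> n+1 \<and> j \<ge> 3)"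

lemma mono_split: "k \<le> i \<Longrightarrow> l \<le> j \<Longrightarrow> (X::'b::comm_ring_1)^i*Y^j = (X^(i-k)*Y^(j-l))*(X^k*Y^l)"
proof -
  assume "k \<le> i" "l \<le> j"
  then have "X^i = X^(i-k)*X^k" "Y^j = Y^(j-l)*Y^l" by (simp_all add: power_add[symmetric])
  then show ?thesis by (simp add: algebra_simps)
qed

lemma In_mono_aux:
  assumes a: "k \<le> i" "l \<le> j" "(Xv::'a::field poly poly)^k * Yv^l \<in> In n"
  shows "(Xv::'a poly poly)^i * Yv^j \<in> In n"
proof -
  have eq: "(Xv::'a poly poly)^i*Yv^j = (Xv^(i-k)*Yv^(j-l)) * (Xv^k*Yv^l)" by (rule mono_split) (use a in auto)
  show ?thesis by (subst eq) (rule In_mult[OF a(3)])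
qed

lemma In_mono: assumes "n \<ge> 2" "Zc n i j" shows "Xv^i * Yv^j \<in> In n"
proof -
  have "j \<ge> 2*n+3 \<or> (i \<ge> 1 \<and> j \<ge> n+3) \<or> i \<ge> 3*n+1 \<or> (i \<ge> n+1 \<and> j \<ge> 3)"
    using assms(2) by (simp add: Zc_def)
  then show ?thesis
  proof (elim disjE conjE)
    assume "j \<ge> 2*n+3"
    then show ?thesis using In_mono_aux[of 0 i "2*n+3" j n] In_g1[of n] by simp
  next
    assume "i \<ge> 1" "j \<ge> n+3"
    then show ?thesis using In_mono_aux[of 1 i "n+3" j n] In_XY[OF assms(1)] by simp
  next
    assume "i \<ge> 3*n+1"
    then show ?thesis using In_mono_aux[of "3*n+1" i 0 j n] In_X[OF assms(1)] by simp
  next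
    assume "i \<ge> n+1" "j \<ge> 3"
    then show ?thesis using In_mono_aux[of "n+1" i 3 j n] In_X3Y[OF assms(1)] by simp
  qed
qed

lemma pCons_sum: "(\<Sum>x\<in>A. [:f x:]) = [:\<Sum>x\<in>A. f x:]"
proof (induction A rule: infinite_finite_induct)
  case (insert x F) then show ?case by simp
qed simp_all

lemma poly_repr: "p = (\<Sum>j\<le>degree p. \<Sum>i\<le>degree (coeff p j). cst (cf p i j) * (Xv^i * Yv^j))"
proof -
  have e: "cst c * (Xv^i * Yv^j) = [:monom c i:] * monom 1 j" for c :: 'a and i j
    by (simp add: cst_def Xv_pow Yv_pow monom_altdef algebra_simps const_mult_poly)
  have "p = (\<Sum>j\<le>degree p. monom (coeff p j) j)" by (simp add: poly_as_sum_of_monoms)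
  also have "\<dots> = (\<Sum>j\<le>degree p. [:coeff p j:] * monom 1 j)"
    by (simp add: const_mult_poly smult_monom)
  also have "\<dots> = (\<Sum>j\<le>degree p. [:\<Sum>i\<le>degree (coeff p j). monom (coeff (coeff p j) i) i:] * monom 1 j)"
    by (simp add: poly_as_sum_of_monoms)
  also have "\<dots> = (\<Sum>j\<le>degree p. \<Sum>i\<le>degree (coeff p j). cst (cf p i j) * (Xv^i * Yv^j))"
    by (simp add: e pCons_sum[symmetric] sum_distrib_right cf_def)
  finally show ?thesis .
qed

lemma In_Z: assumes "n \<ge> 2" "\<And>i j. cf p i j \<noteq> 0 \<Longrightarrow> Zc n i j" shows "p \<in> In n"
proof -
  have "(\<Sum>j\<le>degree p. \<Sum>i\<le>degree (coeff p j). cst (cf p i j) * (Xv^i * Yv^j)) \<in> In n"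
  proof (intro In_sum)
    fix j i
    show "cst (cf p i j) * (Xv^i * Yv^j) \<in> In n"
    proof (cases "cf p i j = 0")
      case True then show ?thesis by (simp add: In_0)
    next
      case False then show ?thesis using In_mult[OF In_mono[OF assms(1) assms(2)]] by blast
    qed
  qed
  then show ?thesis using poly_repr[of p] by simp
qed

lemma In_form: assumes "P \<in> In n"
  obtains a b c where "P = Yv^(2*n+3)*a + Xv^n*(Yv^2*b) - Yv^(n+2)*b + Xv^(2*n+1)*c - Xv*(Yv^(n+1)*c)"
proof -
  obtain a b c where p: "P = a * Yv ^ (2*n+3) + b * (Xv^n * Yv^2 - Yv^(n+2)) + c * (Xv^(2*n+1) - Xv * Yv^(n+1))"
    using assms unfolding In_def by blast
  show ?thesis by (rule that[of a b c]) (simp add: p algebra_simps)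
qed

lemma lamA: assumes "P \<in> In n" "n \<ge> 2" shows "cf P 0 (n+2) + cf P n 2 = 0"
proof -
  obtain a b c where P: "P = Yv^(2*n+3)*a + Xv^n*(Yv^2*b) - Yv^(n+2)*b + Xv^(2*n+1)*c - Xv*(Yv^(n+1)*c)"
    using assms(1) by (rule In_form)
  show ?thesis unfolding P cf_add cf_diff cf_Xpow_mult cf_Ypow_mult cf_X_mult using assms(2) by simp
qed

lemma lamB: assumes "P \<in> In n" "n \<ge> 2" shows "cf P 1 (n+1) + cf P (2*n+1) 0 = 0"
proof -
  obtain a b c where P: "P = Yv^(2*n+3)*a + Xv^n*(Yv^2*b) - Yv^(n+2)*b + Xv^(2*n+1)*c - Xv*(Yv^(n+1)*c)"
    using assms(1) by (rule In_form)
  show ?thesis unfolding P cf_add cf_diff cf_Xpow_mult cf_Ypow_mult cf_X_mult using assms(2) by simp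
qed

lemma lamC: assumes "P \<in> In n" "n \<ge> 2" shows "cf P (n+2) 1 = 0"
proof -
  obtain a b c where P: "P = Yv^(2*n+3)*a + Xv^n*(Yv^2*b) - Yv^(n+2)*b + Xv^(2*n+1)*c - Xv*(Yv^(n+1)*c)"
    using assms(1) by (rule In_form)
  show ?thesis unfolding P cf_add cf_diff cf_Xpow_mult cf_Ypow_mult cf_X_mult using assms(2) by simp
qed

lemma lamD: assumes "P \<in> In n" "n \<ge> 2"
  shows "cf P 0 (n+3) + cf P n 3 + (if n = 2 then cf P 6 0 else 0) = 0"
proof -
  obtain a b c where P: "P = Yv^(2*n+3)*a + Xv^n*(Yv^2*b) - Yv^(n+2)*b + Xv^(2*n+1)*c - Xv*(Yv^(n+1)*c)"
    using assms(1) by (rule In_form)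
  show ?thesis unfolding P cf_add cf_diff cf_Xpow_mult cf_Ypow_mult cf_X_mult using assms(2) by auto
qed

lemma lamE: assumes "P \<in> In n" "n \<ge> 2" shows "cf P 1 (n+2) + cf P (n+1) 2 + cf P (2*n+1) 1 = 0"
proof -
  obtain a b c where P: "P = Yv^(2*n+3)*a + Xv^n*(Yv^2*b) - Yv^(n+2)*b + Xv^(2*n+1)*c - Xv*(Yv^(n+1)*c)"
    using assms(1) by (rule In_form)
  show ?thesis unfolding P cf_add cf_diff cf_Xpow_mult cf_Ypow_mult cf_X_mult using assms(2) by simp
qed

lemma wo_Xpow_mult: assumes "wo a b T p" shows "wo a b (k*a+T) (Xv^k*p)"
  using wo_mult[OF wo_pow[OF wo_X, of a b k] assms] by simp
lemma wo_Ypow_mult: assumes "wo a b T p" shows "wo a b (k*b+T) (Yv^k*p)"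
  using wo_mult[OF wo_pow[OF wo_Y, of a b k] assms] by simp
lemma wo_Xmult: assumes "wo a b T p" shows "wo a b (a+T) (Xv*p)"
  using wo_mult[OF wo_X assms] by simp
lemma wo_Ymult: assumes "wo a b T p" shows "wo a b (b+T) (Yv*p)"
  using wo_mult[OF wo_Y assms] by simp
lemma wo_add_min: "wo a b T1 p \<Longrightarrow> wo a b T2 q \<Longrightarrow> wo a b (min T1 T2) (p + q)"
  by (rule wo_add; erule wo_mono; simp)
lemma wo11_ev0: assumes "ev0 p = 0" shows "wo 1 1 1 p"
  unfolding wo_def
proof (intro allI impI)
  fix i j assume "cf p i j \<noteq> 0"
  then have "\<not> (i = 0 \<and> j = 0)" using assms by (cases "i = 0"; cases "j = 0") (auto simp: ev0_def)
  then show "1 \<le> 1*i + 1*j" by auto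
qed

lemma pCons0_mult: "pCons 0 (q::'b::comm_ring_1 poly) = [:0, 1:] * q"
  by (simp add: mult_pCons_left)

lemma dec: assumes "ev0 (p::'a::field poly poly) = 0" obtains a b where "p = Xv * a + Yv * b"
proof -
  obtain p0 r where p: "p = pCons p0 r" by (rule pCons_cases)
  obtain a0 q0 where p0: "p0 = pCons a0 q0" by (rule pCons_cases)
  have "a0 = 0" using assms by (simp add: ev0_def cf_def p p0)
  have 1: "Xv * [:q0:] = [:[:0,1:] * q0:]" by (simp add: Xv_def)
  have 2: "[:0,1:] * q0 = pCons 0 q0" by simp
  have 3: "Yv * r = pCons 0 r" by (simp add: Yv_def)
  have "p = Xv * [:q0:] + Yv * r"
    unfolding 1 2 3 p p0 \<open>a0 = 0\<close> by simp
  then show ?thesis by (rule that)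
qed

lemma ev0_In: assumes "P \<in> In n" shows "ev0 P = 0"
proof -
  obtain a b c where P: "P = Yv^(2*n+3)*a + Xv^n*(Yv^2*b) - Yv^(n+2)*b + Xv^(2*n+1)*c - Xv*(Yv^(n+1)*c)"
    using assms(1) by (rule In_form)
  show ?thesis unfolding ev0_def P cf_add cf_diff cf_Xpow_mult cf_Ypow_mult cf_X_mult by simp
qed

lemma stepB:
  fixes u v \<alpha> \<beta> \<epsilon> \<delta> :: "'a::field poly poly"
  assumes n: "n \<ge> 2" and R3: "u^(2*n+1) - u*v^(n+1) \<in> In n"
    and u: "u = Xv*\<alpha> + Yv*\<beta>" and v: "v = Xv^2*\<epsilon> + Yv*\<delta>"
  shows "ev0 \<beta> * ev0 \<delta> ^ (n+1) = 0"
proof -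
  have wu: "wo 1 1 1 u" unfolding u
    by (rule wo_add; rule wo_mono, rule wo_Xmult wo_Ymult, rule wo_zero_T, simp)
  have wv: "wo 1 1 1 v" unfolding v
    by (rule wo_add; rule wo_mono, rule wo_Xpow_mult wo_Ymult, rule wo_zero_T, simp)
  have wyd: "wo 1 1 1 (Yv*\<delta>)" by (rule wo_mono, rule wo_Ymult, rule wo_zero_T, simp)
  have wd: "wo 1 1 2 (v - Yv*\<delta>)" unfolding v
    by (simp, rule wo_mono, rule wo_Xpow_mult, rule wo_zero_T, simp)
  define E1 where "E1 = u^(2*n+1)"
  define E2 where "E2 = u * (v^(n+1) - (Yv*\<delta>)^(n+1))"
  define H1 where "H1 = \<alpha>*\<delta>^(n+1)"
  define H2 where "H2 = \<beta>*\<delta>^(n+1)"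
  have wE1: "wo 1 1 (2*n+1) E1" unfolding E1_def using wo_pow[OF wu, of "2*n+1"] by simp
  have wE2: "wo 1 1 (n+3) E2" unfolding E2_def
    by (rule wo_mono[OF wo_mult[OF wu wo_pow_diff[OF wv wyd wd, of "n+1"]]]) simp
  have eq: "u^(2*n+1) - u*v^(n+1) = E1 - (Xv*(Yv^(n+1)*H1) + Yv^(n+2)*H2) - E2"
    unfolding E1_def E2_def H1_def H2_def u by (simp add: algebra_simps power_mult_distrib)
  have "cf (u^(2*n+1) - u*v^(n+1)) 0 (n+2) + cf (u^(2*n+1) - u*v^(n+1)) n 2 = 0"
    using lamA[OF R3 n] .
  then have "cf E1 0 (n+2) - ev0 H2 - cf E2 0 (n+2) + (cf E1 n 2 - cf E2 n 2) = 0"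
    unfolding eq cf_add cf_diff cf_X_mult cf_Ypow_mult using n by (simp add: ev0_def)
  moreover have "cf E1 0 (n+2) = 0" "cf E1 n 2 = 0" "cf E2 0 (n+2) = 0" "cf E2 n 2 = 0"
    using n by (auto intro!: wo_cf[OF wE1] wo_cf[OF wE2])
  ultimately show ?thesis by (simp add: H2_def ev0_mult ev0_pow)
qed

lemma stepE1:
  fixes u v \<alpha> \<beta> \<epsilon> \<delta> :: "'a::field poly poly"
  assumes n: "n \<ge> 2" and R2: "u^n*v^2 - v^(n+2) \<in> In n"
    and u: "u = Xv*\<alpha> + Yv^2*\<beta>" and v: "v = Xv^2*\<epsilon> + Yv*\<delta>"
  shows "ev0 \<alpha> ^ n * ev0 \<delta> ^ 2 - ev0 \<delta> ^ (n+2) = 0"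
proof -
  have wu: "wo 1 1 1 u" unfolding u
    by (rule wo_add; rule wo_mono, rule wo_Xmult wo_Ypow_mult, rule wo_zero_T, simp)
  have wxa: "wo 1 1 1 (Xv*\<alpha>)" by (rule wo_mono, rule wo_Xmult, rule wo_zero_T, simp)
  have wdu: "wo 1 1 2 (u - Xv*\<alpha>)" unfolding u
    by (simp, rule wo_mono, rule wo_Ypow_mult, rule wo_zero_T, simp)
  have wv: "wo 1 1 1 v" unfolding v
    by (rule wo_add; rule wo_mono, rule wo_Xpow_mult wo_Ymult, rule wo_zero_T, simp)
  have wyd: "wo 1 1 1 (Yv*\<delta>)" by (rule wo_mono, rule wo_Ymult, rule wo_zero_T, simp)
  have wd: "wo 1 1 2 (v - Yv*\<delta>)" unfolding v
    by (simp, rule wo_mono, rule wo_Xpow_mult, rule wo_zero_T, simp)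
  have wxa0: "wo 1 0 1 (Xv*\<alpha>)" by (rule wo_mono, rule wo_Xmult, rule wo_zero_T, simp)
  have wyd0: "wo 1 0 0 (Yv*\<delta>)" by simp
  have wv0: "wo 1 0 0 v" by simp
  have wd0: "wo 1 0 2 (v - Yv*\<delta>)" unfolding v
    by (simp, rule wo_mono, rule wo_Xpow_mult, rule wo_zero_T, simp)
  define Ta where "Ta = (Xv*\<alpha>)^n * (v^2 - (Yv*\<delta>)^2)"
  define Tb where "Tb = (u^n - (Xv*\<alpha>)^n) * v^2"
  define Tc where "Tc = v^(n+2) - (Yv*\<delta>)^(n+2)"
  define H1 where "H1 = \<alpha>^n*\<delta>^2"
  define H2 where "H2 = \<delta>^(n+2)"
  have wTa: "wo 1 0 (n+2) Ta" unfolding Ta_def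
    by (rule wo_mono[OF wo_mult[OF wo_pow[OF wxa0] wo_pow_diff[OF wv0 wyd0 wd0, of 2]]]) simp
  have wTb: "wo 1 1 (n+3) Tb" unfolding Tb_def
    by (rule wo_mono[OF wo_mult[OF wo_pow_diff[OF wu wxa wdu, of n] wo_pow[OF wv, of 2]]]) (use n in simp)
  have wTc: "wo 1 1 (n+3) Tc" unfolding Tc_def
    by (rule wo_mono[OF wo_pow_diff[OF wv wyd wd, of "n+2"]]) simp
  have eq: "u^n*v^2 - v^(n+2) = Xv^n*(Yv^2*H1) + Ta + Tb - (Yv^(n+2)*H2 + Tc)"
    unfolding Ta_def Tb_def Tc_def H1_def H2_def by (simp add: algebra_simps power_mult_distrib)
  have "cf (u^n*v^2 - v^(n+2)) 0 (n+2) + cf (u^n*v^2 - v^(n+2)) n 2 = 0"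
    using lamA[OF R2 n] .
  then have "cf Ta 0 (n+2) + cf Tb 0 (n+2) - (ev0 H2 + cf Tc 0 (n+2))
      + (ev0 H1 + cf Ta n 2 + cf Tb n 2 - cf Tc n 2) = 0"
    unfolding eq cf_add cf_diff cf_X_mult cf_Xpow_mult cf_Ypow_mult using n by (simp add: ev0_def)
  moreover have "cf Ta 0 (n+2) = 0" "cf Ta n 2 = 0" "cf Tb 0 (n+2) = 0" "cf Tb n 2 = 0"
    "cf Tc 0 (n+2) = 0" "cf Tc n 2 = 0"
    using n by (auto intro!: wo_cf[OF wTa] wo_cf[OF wTb] wo_cf[OF wTc])
  ultimately show ?thesis by (simp add: H1_def H2_def ev0_mult ev0_pow)
qed

lemma stepE1':
  fixes u v \<alpha> \<beta> \<epsilon> \<delta> :: "'a::field poly poly"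
  assumes n: "n \<ge> 2" and R3: "u^(2*n+1) - u*v^(n+1) \<in> In n"
    and u: "u = Xv*\<alpha> + Yv^2*\<beta>" and v: "v = Xv^2*\<epsilon> + Yv*\<delta>"
  shows "ev0 \<alpha> ^ (2*n+1) - ev0 \<alpha> * ev0 \<delta> ^ (n+1) = 0"
proof -
  have wu: "wo 1 1 1 u" unfolding u
    by (rule wo_add; rule wo_mono, rule wo_Xmult wo_Ypow_mult, rule wo_zero_T, simp)
  have wxa: "wo 1 1 1 (Xv*\<alpha>)" by (rule wo_mono, rule wo_Xmult, rule wo_zero_T, simp)
  have wdu: "wo 1 1 2 (u - Xv*\<alpha>)" unfolding u
    by (simp, rule wo_mono, rule wo_Ypow_mult, rule wo_zero_T, simp)
  have wdu01: "wo 0 1 2 (u - Xv*\<alpha>)" unfolding u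
    by (simp, rule wo_mono, rule wo_Ypow_mult, rule wo_zero_T, simp)
  have wv0: "wo 1 0 0 v" "wo 1 0 0 (Yv*\<delta>)" "wo 0 1 0 u" "wo 0 1 0 (Xv*\<alpha>)" "wo 1 0 0 u" by simp_all
  have wd0: "wo 1 0 2 (v - Yv*\<delta>)" unfolding v
    by (simp, rule wo_mono, rule wo_Xpow_mult, rule wo_zero_T, simp)
  have wv12: "wo 1 2 2 v" unfolding v
    by (rule wo_add; rule wo_mono, rule wo_Xpow_mult wo_Ymult, rule wo_zero_T, simp)
  have wyd12: "wo 1 2 2 (Yv*\<delta>)" by (rule wo_mono, rule wo_Ymult, rule wo_zero_T, simp)
  have wd12: "wo 1 2 2 (v - Yv*\<delta>)" unfolding v
    by (simp, rule wo_mono, rule wo_Xpow_mult, rule wo_zero_T, simp)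
  have wu12: "wo 1 2 1 u" unfolding u
    by (rule wo_add; rule wo_mono, rule wo_Xmult wo_Ypow_mult, rule wo_zero_T, simp)
  define E1 where "E1 = u^(2*n+1) - (Xv*\<alpha>)^(2*n+1)"
  define E2 where "E2 = u * (v^(n+1) - (Yv*\<delta>)^(n+1))"
  define H0 where "H0 = \<alpha>^(2*n+1)"
  define H1 where "H1 = \<alpha>*\<delta>^(n+1)"
  define H2 where "H2 = \<beta>*\<delta>^(n+1)"
  have wE1: "wo 1 1 (2*n+2) E1" unfolding E1_def
    by (rule wo_mono[OF wo_pow_diff[OF wu wxa wdu, of "2*n+1"]]) simp
  have wE1': "wo 0 1 2 E1" unfolding E1_def
    by (rule wo_mono[OF wo_pow_diff[OF wv0(3) wv0(4) wdu01, of "2*n+1"]]) simp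
  have wE2: "wo 1 0 2 E2" unfolding E2_def
    by (rule wo_mono[OF wo_mult[OF wv0(5) wo_pow_diff[OF wv0(1) wv0(2) wd0, of "n+1"]]]) simp
  have wE2': "wo 1 2 (2*n+3) E2" unfolding E2_def
    by (rule wo_mono[OF wo_mult[OF wu12 wo_pow_diff[OF wv12 wyd12 wd12, of "n+1"]]]) simp
  have eq: "u^(2*n+1) - u*v^(n+1) = Xv^(2*n+1)*H0 + E1 - (Xv*(Yv^(n+1)*H1) + Yv^(n+3)*H2 + E2)"
    unfolding E1_def E2_def H0_def H1_def H2_def u by (simp add: algebra_simps power_mult_distrib power_add eval_nat_numeral)
  have "cf (u^(2*n+1) - u*v^(n+1)) 1 (n+1) + cf (u^(2*n+1) - u*v^(n+1)) (2*n+1) 0 = 0"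
    using lamB[OF R3 n] .
  then have "cf E1 1 (n+1) - (ev0 H1 + cf E2 1 (n+1)) + (ev0 H0 + cf E1 (2*n+1) 0 - cf E2 (2*n+1) 0) = 0"
    unfolding eq cf_add cf_diff cf_X_mult cf_Xpow_mult cf_Ypow_mult using n by (simp add: ev0_def)
  moreover have "cf E1 1 (n+1) = 0" by (rule wo_cf[OF wE1]) (use n in simp)
  moreover have "cf E1 (2*n+1) 0 = 0" by (rule wo_cf[OF wE1']) (use n in simp)
  moreover have "cf E2 1 (n+1) = 0" by (rule wo_cf[OF wE2]) (use n in simp)
  moreover have "cf E2 (2*n+1) 0 = 0" by (rule wo_cf[OF wE2']) (use n in simp)
  ultimately show ?thesis by (simp add: H0_def H1_def ev0_mult ev0_pow)
qed

lemma stepE2: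
  fixes u v \<alpha> \<beta> \<epsilon> \<delta> :: "'a::field poly poly"
  assumes n: "n \<ge> 2" and R2: "u^n*v^2 - v^(n+2) \<in> In n"
    and u: "u = Xv*\<alpha> + Yv^2*\<beta>" and v: "v = Xv^2*\<epsilon> + Yv*\<delta>"
  shows "2 * ev0 \<alpha> ^ n * ev0 \<epsilon> * ev0 \<delta> = 0"
proof -
  have wdu01: "wo 0 1 2 (u - Xv*\<alpha>)" unfolding u
    by (simp, rule wo_mono, rule wo_Ypow_mult, rule wo_zero_T, simp)
  have w0: "wo 0 1 0 u" "wo 0 1 0 (Xv*\<alpha>)" "wo 0 1 0 (v^2)" by simp_all
  have wv12: "wo 1 2 2 v" unfolding v
    by (rule wo_add; rule wo_mono, rule wo_Xpow_mult wo_Ymult, rule wo_zero_T, simp)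
  have wyd12: "wo 1 2 2 (Yv*\<delta>)" by (rule wo_mono, rule wo_Ymult, rule wo_zero_T, simp)
  have wd12: "wo 1 2 2 (v - Yv*\<delta>)" unfolding v
    by (simp, rule wo_mono, rule wo_Xpow_mult, rule wo_zero_T, simp)
  define Tb where "Tb = (u^n - (Xv*\<alpha>)^n) * v^2"
  define Tc where "Tc = v^(n+2) - (Yv*\<delta>)^(n+2)"
  define H1 where "H1 = \<alpha>^n*\<epsilon>^2"
  define H2 where "H2 = \<alpha>^n*\<epsilon>*\<delta>"
  define H3 where "H3 = \<alpha>^n*\<delta>^2"
  define H4 where "H4 = \<delta>^(n+2)"
  have wTb: "wo 0 1 2 Tb" unfolding Tb_def
    by (rule wo_mono[OF wo_mult[OF wo_pow_diff[OF w0(1) w0(2) wdu01, of n] w0(3)]]) simp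
  have wTc: "wo 1 2 (2*n+4) Tc" unfolding Tc_def
    by (rule wo_mono[OF wo_pow_diff[OF wv12 wyd12 wd12, of "n+2"]]) simp
  have eq: "u^n*v^2 - v^(n+2) = Xv^(n+4)*H1 + Xv^(n+2)*(Yv*H2) + Xv^(n+2)*(Yv*H2) + Xv^n*(Yv^2*H3) + Tb
      - (Yv^(n+2)*H4 + Tc)"
    unfolding Tb_def Tc_def H1_def H2_def H3_def H4_def v
    by (simp add: algebra_simps power_mult_distrib power2_eq_square power_add eval_nat_numeral)
  have "cf (u^n*v^2 - v^(n+2)) (n+2) 1 = 0"
    using lamC[OF R2 n] .
  then have "ev0 H2 + ev0 H2 + cf Tb (n+2) 1 - cf Tc (n+2) 1 = 0"
    unfolding eq cf_add cf_diff cf_X_mult cf_Xpow_mult cf_Ypow_mult cf_Y_mult using n by (simp add: ev0_def)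
  moreover have "cf Tb (n+2) 1 = 0" "cf Tc (n+2) 1 = 0"
    using n by (auto intro!: wo_cf[OF wTb] wo_cf[OF wTc])
  ultimately show ?thesis by (simp add: H2_def ev0_mult ev0_pow algebra_simps)
qed

lemma stepE3:
  fixes u v \<alpha> \<beta> \<epsilon> \<delta> :: "'a::field poly poly"
  assumes n: "n \<ge> 2" and R2: "u^n*v^2 - v^(n+2) \<in> In n"
    and u: "u = Xv*\<alpha> + Yv^2*\<beta>" and v: "v = Xv^3*\<epsilon> + Yv*\<delta>"
  shows "D (\<alpha>^n*\<delta>^2) - D (\<delta>^(n+2)) = 0"
proof -
  have wdu01: "wo 0 1 2 (u - Xv*\<alpha>)" unfolding u
    by (simp, rule wo_mono, rule wo_Ypow_mult, rule wo_zero_T, simp)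
  have w0: "wo 0 1 0 u" "wo 0 1 0 (Xv*\<alpha>)" "wo 0 1 0 (v^2)" "wo 1 0 0 v" "wo 1 0 0 (Yv*\<delta>)" by simp_all
  have wu21: "wo 2 1 2 u" unfolding u
    by (rule wo_add; rule wo_mono, rule wo_Xmult wo_Ypow_mult, rule wo_zero_T, simp)
  have wxa21: "wo 2 1 2 (Xv*\<alpha>)" by (rule wo_mono, rule wo_Xmult, rule wo_zero_T, simp)
  have wdu21: "wo 2 1 2 (u - Xv*\<alpha>)" unfolding u
    by (simp, rule wo_mono, rule wo_Ypow_mult, rule wo_zero_T, simp)
  have wv21: "wo 2 1 1 v" unfolding v
    by (rule wo_add; rule wo_mono, rule wo_Xpow_mult wo_Ymult, rule wo_zero_T, simp)
  have wu12: "wo 1 2 1 u" unfolding u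
    by (rule wo_add; rule wo_mono, rule wo_Xmult wo_Ypow_mult, rule wo_zero_T, simp)
  have wxa12: "wo 1 2 1 (Xv*\<alpha>)" by (rule wo_mono, rule wo_Xmult, rule wo_zero_T, simp)
  have wdu12: "wo 1 2 4 (u - Xv*\<alpha>)" unfolding u
    by (simp, rule wo_mono, rule wo_Ypow_mult, rule wo_zero_T, simp)
  have wv12: "wo 1 2 2 v" unfolding v
    by (rule wo_add; rule wo_mono, rule wo_Xpow_mult wo_Ymult, rule wo_zero_T, simp)
  have wyd12: "wo 1 2 2 (Yv*\<delta>)" by (rule wo_mono, rule wo_Ymult, rule wo_zero_T, simp)
  have wd12: "wo 1 2 3 (v - Yv*\<delta>)" unfolding v
    by (simp, rule wo_mono, rule wo_Xpow_mult, rule wo_zero_T, simp)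
  have wd10: "wo 1 0 3 (v - Yv*\<delta>)" unfolding v
    by (simp, rule wo_mono, rule wo_Xpow_mult, rule wo_zero_T, simp)
  define Tb where "Tb = (u^n - (Xv*\<alpha>)^n) * v^2"
  define Tc where "Tc = v^(n+2) - (Yv*\<delta>)^(n+2)"
  define H1 where "H1 = \<alpha>^n*\<epsilon>^2"
  define H2 where "H2 = \<alpha>^n*\<epsilon>*\<delta>"
  define H3 where "H3 = \<alpha>^n*\<delta>^2"
  define H4 where "H4 = \<delta>^(n+2)"
  have wTb1: "wo 0 1 2 Tb" unfolding Tb_def
    by (rule wo_mono[OF wo_mult[OF wo_pow_diff[OF w0(1) w0(2) wdu01, of n] w0(3)]]) simp
  have wTb2: "wo 2 1 (2*n+2) Tb" unfolding Tb_def
    by (rule wo_mono[OF wo_mult[OF wo_pow_diff[OF wu21 wxa21 wdu21, of n] wo_pow[OF wv21, of 2]]]) (use n in simp)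
  have wTb3: "wo 1 2 (n+7) Tb" unfolding Tb_def
    by (rule wo_mono[OF wo_mult[OF wo_pow_diff[OF wu12 wxa12 wdu12, of n] wo_pow[OF wv12, of 2]]]) (use n in simp)
  have wTc1: "wo 1 0 3 Tc" unfolding Tc_def
    by (rule wo_mono[OF wo_pow_diff[OF w0(4) w0(5) wd10, of "n+2"]]) simp
  have wTc2: "wo 1 2 (2*n+5) Tc" unfolding Tc_def
    by (rule wo_mono[OF wo_pow_diff[OF wv12 wyd12 wd12, of "n+2"]]) simp
  have eq: "u^n*v^2 - v^(n+2) = Xv^(n+6)*H1 + Xv^(n+3)*(Yv*H2) + Xv^(n+3)*(Yv*H2) + Xv^n*(Yv^2*H3) + Tb
      - (Yv^(n+2)*H4 + Tc)"
    unfolding Tb_def Tc_def H1_def H2_def H3_def H4_def v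
    by (simp add: algebra_simps power_mult_distrib power2_eq_square power_add eval_nat_numeral)
  have "cf (u^n*v^2 - v^(n+2)) 0 (n+3) + cf (u^n*v^2 - v^(n+2)) n 3
     + (if n = 2 then cf (u^n*v^2 - v^(n+2)) 6 0 else 0) = 0"
    using lamD[OF R2 n] .
  then have "cf Tb 0 (n+3) - (D H4 + cf Tc 0 (n+3)) + (D H3 + cf Tb n 3 - cf Tc n 3)
     + (if n = 2 then cf Tb 6 0 - cf Tc 6 0 else 0) = 0"
    unfolding eq cf_add cf_diff cf_X_mult cf_Xpow_mult cf_Ypow_mult cf_Y_mult using n
    by (cases "n = 2") (simp_all add: D_def)
  moreover have "cf Tb 0 (n+3) = 0" by (rule wo_cf[OF wTb2]) (use n in simp)
  moreover have "cf Tb n 3 = 0" by (rule wo_cf[OF wTb3]) (use n in simp)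
  moreover have "cf Tb 6 0 = 0" by (rule wo_cf[OF wTb1]) (use n in simp)
  moreover have "cf Tc 0 (n+3) = 0" by (rule wo_cf[OF wTc1]) (use n in simp)
  moreover have "cf Tc n 3 = 0" by (rule wo_cf[OF wTc2]) (use n in simp)
  moreover have "n = 2 \<Longrightarrow> cf Tc 6 0 = 0" by (rule wo_cf[OF wTc2]) (use n in simp)
  ultimately show ?thesis by (simp add: H3_def H4_def split: if_splits)
qed

lemma stepE4:
  fixes u v \<alpha> \<beta> \<epsilon> \<delta> :: "'a::field poly poly"
  assumes n: "n \<ge> 2" and R3: "u^(2*n+1) - u*v^(n+1) \<in> In n"
    and u: "u = Xv*\<alpha> + Yv^2*\<beta>" and v: "v = Xv^3*\<epsilon> + Yv*\<delta>"
  shows "D (\<alpha>^(2*n+1)) - D (\<alpha>*\<delta>^(n+1)) = 0"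
proof -
  have wdu01: "wo 0 1 2 (u - Xv*\<alpha>)" unfolding u
    by (simp, rule wo_mono, rule wo_Ypow_mult, rule wo_zero_T, simp)
  have w0: "wo 0 1 0 u" "wo 0 1 0 (Xv*\<alpha>)" "wo 1 0 0 u" "wo 1 0 0 v" "wo 1 0 0 (Yv*\<delta>)" by simp_all
  have wu21: "wo 2 1 2 u" unfolding u
    by (rule wo_add; rule wo_mono, rule wo_Xmult wo_Ypow_mult, rule wo_zero_T, simp)
  have wxa21: "wo 2 1 2 (Xv*\<alpha>)" by (rule wo_mono, rule wo_Xmult, rule wo_zero_T, simp)
  have wdu21: "wo 2 1 2 (u - Xv*\<alpha>)" unfolding u
    by (simp, rule wo_mono, rule wo_Ypow_mult, rule wo_zero_T, simp)
  have wu12: "wo 1 2 1 u" unfolding u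
    by (rule wo_add; rule wo_mono, rule wo_Xmult wo_Ypow_mult, rule wo_zero_T, simp)
  have wv12: "wo 1 2 2 v" unfolding v
    by (rule wo_add; rule wo_mono, rule wo_Xpow_mult wo_Ymult, rule wo_zero_T, simp)
  have wyd12: "wo 1 2 2 (Yv*\<delta>)" by (rule wo_mono, rule wo_Ymult, rule wo_zero_T, simp)
  have wd12: "wo 1 2 3 (v - Yv*\<delta>)" unfolding v
    by (simp, rule wo_mono, rule wo_Xpow_mult, rule wo_zero_T, simp)
  have wd10: "wo 1 0 3 (v - Yv*\<delta>)" unfolding v
    by (simp, rule wo_mono, rule wo_Xpow_mult, rule wo_zero_T, simp)
  define E1 where "E1 = u^(2*n+1) - (Xv*\<alpha>)^(2*n+1)"
  define E2 where "E2 = u * (v^(n+1) - (Yv*\<delta>)^(n+1))"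
  define H0 where "H0 = \<alpha>^(2*n+1)"
  define H1 where "H1 = \<alpha>*\<delta>^(n+1)"
  define H2 where "H2 = \<beta>*\<delta>^(n+1)"
  have wE1a: "wo 2 1 (4*n+2) E1" unfolding E1_def
    by (rule wo_mono[OF wo_pow_diff[OF wu21 wxa21 wdu21, of "2*n+1"]]) simp
  have wE1b: "wo 0 1 2 E1" unfolding E1_def
    by (rule wo_mono[OF wo_pow_diff[OF w0(1) w0(2) wdu01, of "2*n+1"]]) simp
  have wE2a: "wo 1 0 3 E2" unfolding E2_def
    by (rule wo_mono[OF wo_mult[OF w0(3) wo_pow_diff[OF w0(4) w0(5) wd10, of "n+1"]]]) simp
  have wE2b: "wo 1 2 (2*n+4) E2" unfolding E2_def
    by (rule wo_mono[OF wo_mult[OF wu12 wo_pow_diff[OF wv12 wyd12 wd12, of "n+1"]]]) simp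
  have eq: "u^(2*n+1) - u*v^(n+1) = Xv^(2*n+1)*H0 + E1 - (Xv*(Yv^(n+1)*H1) + Yv^(n+3)*H2 + E2)"
    unfolding E1_def E2_def H0_def H1_def H2_def u
    by (simp add: algebra_simps power_mult_distrib power_add eval_nat_numeral)
  have "cf (u^(2*n+1) - u*v^(n+1)) 1 (n+2) + cf (u^(2*n+1) - u*v^(n+1)) (n+1) 2
      + cf (u^(2*n+1) - u*v^(n+1)) (2*n+1) 1 = 0"
    using lamE[OF R3 n] .
  then have "cf E1 1 (n+2) - (D H1 + cf E2 1 (n+2)) + (cf E1 (n+1) 2 - cf E2 (n+1) 2)
      + (D H0 + cf E1 (2*n+1) 1 - cf E2 (2*n+1) 1) = 0"
    unfolding eq cf_add cf_diff cf_X_mult cf_Xpow_mult cf_Ypow_mult using n by (simp add: D_def)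
  moreover have "cf E1 1 (n+2) = 0" by (rule wo_cf[OF wE1a]) (use n in simp)
  moreover have "cf E1 (n+1) 2 = 0" by (rule wo_cf[OF wE1a]) (use n in simp)
  moreover have "cf E1 (2*n+1) 1 = 0" by (rule wo_cf[OF wE1b]) (use n in simp)
  moreover have "cf E2 1 (n+2) = 0" by (rule wo_cf[OF wE2a]) (use n in simp)
  moreover have "cf E2 (n+1) 2 = 0" by (rule wo_cf[OF wE2b]) (use n in simp)
  moreover have "cf E2 (2*n+1) 1 = 0" by (rule wo_cf[OF wE2b]) (use n in simp)
  ultimately show ?thesis by (simp add: H0_def H1_def)
qed

lemma Zc_arith1: "n \<ge> 2 \<Longrightarrow> 2*n+2 \<le> i+j \<Longrightarrow> 4*n+3 \<le> i+2*j \<Longrightarrow> 2*n+3 \<le> 2*i+j \<Longrightarrow> Zc n i j"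
  unfolding Zc_def by arith

lemma Zc_arith2: "n \<ge> 2 \<Longrightarrow> 4*n+2 \<le> i+j \<Longrightarrow> Zc n i j"
  unfolding Zc_def by arith

lemma stepZ0:
  fixes v \<epsilon> \<delta> :: "'a::field poly poly"
  assumes n: "n \<ge> 2" and v: "v = Xv^2*\<epsilon> + Yv*\<delta>" and d: "ev0 \<delta> = 0"
  shows "v^(2*n+1) \<in> In n"
proof -
  have wv: "wo 1 1 2 v" unfolding v
    by (rule wo_add; rule wo_mono, rule wo_Xpow_mult wo_Ymult, rule wo11_ev0[OF d] wo_zero_T, simp)
  have w: "wo 1 1 (4*n+2) (v^(2*n+1))"
    by (rule wo_mono[OF wo_pow[OF wv]]) simp
  show ?thesis
  proof (rule In_Z[OF n])
    fix i j assume "cf (v^(2*n+1)) i j \<noteq> 0"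
    then have "4*n+2 \<le> i+j" using w unfolding wo_def by force
    then show "Zc n i j" using Zc_arith2 n by blast
  qed
qed

lemma wo_four: assumes "T \<le> 3*a" "T \<le> a+b" "T \<le> a+2*b" "T \<le> 3*b"
  shows "wo a b T (Xv^3*\<epsilon> + Yv*(Xv*\<delta>1 + Yv*(Xv*\<delta>3 + Yv*\<delta>4)))"
proof -
  have 1: "wo a b T (Xv^3*\<epsilon>)" by (rule wo_mono, rule wo_Xpow_mult, rule wo_zero_T) (use assms in simp)
  have 2: "wo a b T (Yv*(Xv*\<delta>1))" by (rule wo_mono, rule wo_Ymult, rule wo_Xmult, rule wo_zero_T) (use assms in simp)
  have 3: "wo a b T (Yv*(Yv*(Xv*\<delta>3)))"
    by (rule wo_mono, rule wo_Ymult, rule wo_Ymult, rule wo_Xmult, rule wo_zero_T) (use assms in simp)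
  have 4: "wo a b T (Yv*(Yv*(Yv*\<delta>4)))"
    by (rule wo_mono, rule wo_Ymult, rule wo_Ymult, rule wo_Ymult, rule wo_zero_T) (use assms in simp)
  have "Xv^3*\<epsilon> + Yv*(Xv*\<delta>1 + Yv*(Xv*\<delta>3 + Yv*\<delta>4)) =
     Xv^3*\<epsilon> + (Yv*(Xv*\<delta>1) + (Yv*(Yv*(Xv*\<delta>3)) + Yv*(Yv*(Yv*\<delta>4))))"
    by (simp add: algebra_simps)
  then show ?thesis using wo_add[OF 1 wo_add[OF 2 wo_add[OF 3 4]]] by simp
qed

lemma stepF:
  fixes v \<epsilon> \<delta> :: "'a::field poly poly"
  assumes n: "n \<ge> 2" and v: "v = Xv^3*\<epsilon> + Yv*\<delta>" and e: "D \<delta> = 0"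
  shows "v^(2*n+1) - cst (ev0 \<delta> ^ (2*n+1)) * Yv^(2*n+1) \<in> In n"
proof -
  define d where "d = ev0 \<delta>"
  have "ev0 (\<delta> - cst d) = 0" by (simp add: d_def ev0_def)
  then obtain \<delta>1 \<delta>2 where d1: "\<delta> - cst d = Xv*\<delta>1 + Yv*\<delta>2" by (rule dec)
  have "D (\<delta> - cst d) = 0" using e by (simp add: D_def)
  then have "ev0 \<delta>2 = 0" unfolding d1 by (simp add: D_def ev0_def)
  then obtain \<delta>3 \<delta>4 where d2: "\<delta>2 = Xv*\<delta>3 + Yv*\<delta>4" by (rule dec)
  have w: "v - cst d * Yv = Xv^3*\<epsilon> + Yv*(Xv*\<delta>1 + Yv*(Xv*\<delta>3 + Yv*\<delta>4))"
    unfolding v using d1 d2 by (simp add: algebra_simps)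
  have wv: "wo a b T v" if "T \<le> 3*a" "T \<le> b" for a b T
    unfolding v by (rule wo_add; rule wo_mono, rule wo_Xpow_mult wo_Ymult, rule wo_zero_T) (use that in simp_all)
  have wy: "wo a b b (cst d * Yv)" for a b by (rule wo_cst_mult, rule wo_Y)
  define P where "P = v^(2*n+1) - (cst d * Yv)^(2*n+1)"
  have wv1: "wo 1 1 1 v" "wo 1 2 2 v" "wo 2 1 1 v" by (rule wv; simp)+
  have wd1: "wo 1 1 2 (v - cst d * Yv)" "wo 1 2 3 (v - cst d * Yv)" "wo 2 1 3 (v - cst d * Yv)"
    unfolding w by (rule wo_four; simp)+
  have P1: "wo 1 1 (2*n+2) P" unfolding P_def
    by (rule wo_mono[OF wo_pow_diff[OF wv1(1) wy wd1(1), of "2*n+1"]]) simp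
  have P2: "wo 1 2 (4*n+3) P" unfolding P_def
    by (rule wo_mono[OF wo_pow_diff[OF wv1(2) wy wd1(2), of "2*n+1"]]) simp
  have P3: "wo 2 1 (2*n+3) P" unfolding P_def
    by (rule wo_mono[OF wo_pow_diff[OF wv1(3) wy wd1(3), of "2*n+1"]]) simp
  have PIn: "P \<in> In n"
  proof (rule In_Z[OF n])
    fix i j assume "cf P i j \<noteq> 0"
    then have "2*n+2 \<le> i+j" "4*n+3 \<le> i+2*j" "2*n+3 \<le> 2*i+j"
      using P1 P2 P3 unfolding wo_def by force+
    then show "Zc n i j" using Zc_arith1 n by blast
  qed
  have eqc: "(cst d * Yv)^(2*n+1) = cst (d^(2*n+1)) * Yv^(2*n+1)"
    by (simp only: power_mult_distrib cst_pow)
  show ?thesis using PIn unfolding P_def eqc unfolding d_def .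
qed


lemma dvd_cancel_unit:
  fixes q r :: "'a::field poly"
  assumes "[:0,1:]^k dvd q * r" "poly r 0 \<noteq> 0"
  shows "[:0,1:]^k dvd q"
proof (cases "q = 0")
  case True then show ?thesis by simp
next
  case False
  have r: "r \<noteq> 0" using assms(2) by auto
  have x: "[:- 0, 1:] = ([:0,1:] :: 'a poly)" by simp
  have "order 0 r = 0" using assms(2) by (simp add: order_0I)
  moreover have "order 0 (q * r) = order 0 q + order 0 r" using False r by (simp add: order_mult)
  moreover have "k \<le> order 0 (q * r)" using assms(1) False r order_divides[of 0 k "q*r"] by (simp add: x)
  ultimately have "k \<le> order 0 q" by simp
  then show ?thesis using order_divides[of 0 k q] by (simp add: x)
qed

lemma uni:
  fixes u0 v0 :: "'a::field poly"
  assumes n: "n \<ge> 2" and u0: "coeff u0 0 = 0" and v0: "coeff v0 0 = 0"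
    and h3: "[:0,1:]^(2*n+1) dvd u0^(2*n+1) - u0*v0^(n+1)"
    and h2: "[:0,1:]^(2*n+1) dvd u0^n*v0^2 - v0^(n+2)"
  shows "coeff v0 1 = 0"
proof (rule ccontr)
  assume c: "coeff v0 1 \<noteq> 0"
  define x where "x = ([:0,1:] :: 'a poly)"
  have x0: "x \<noteq> 0" by (simp add: x_def)
  obtain w where w: "v0 = x * w"
  proof -
    obtain a w where "v0 = pCons a w" by (rule pCons_cases)
    then have "v0 = pCons 0 w" using v0 by simp
    then show ?thesis using that[of w] by (simp add: x_def)
  qed
  obtain z where z: "u0 = x * z"
  proof -
    obtain a z where "u0 = pCons a z" by (rule pCons_cases)
    then have "u0 = pCons 0 z" using u0 by simp
    then show ?thesis using that[of z] by (simp add: x_def)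
  qed
  have w0: "poly w 0 \<noteq> 0" using c w by (simp add: x_def poly_0_coeff_0)
  have A: "x^(2*n+1) dvd u0^(2*n+1)" unfolding z by (simp add: power_mult_distrib)
  have "x^(2*n+1) dvd u0^(2*n+1) - (u0^(2*n+1) - u0*v0^(n+1))"
    by (rule dvd_diff[OF A h3[folded x_def]])
  then have "x^(2*n+1) dvd u0*v0^(n+1)" by simp
  moreover have "u0*v0^(n+1) = x^(n+2) * (z*w^(n+1))" unfolding z w by (simp add: power_mult_distrib algebra_simps)
  moreover have "x^(2*n+1) = x^(n+2) * x^(n-1)" proof -
    have "2*n+1 = (n+2) + (n-1)" using n by simp
    then show ?thesis by (metis power_add)
  qed
  ultimately have "x^(n-1) dvd z*w^(n+1)" using x0 by simp
  then have "x^(n-1) dvd z" using dvd_cancel_unit[of "n-1" z "w^(n+1)"] w0 by (simp add: x_def poly_power)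
  then obtain z' where z': "z = x^(n-1)*z'" by (auto elim: dvdE)
  have xn: "x * x^(n-1) = x^n" using n by (cases n) auto
  have "u0 = x^n * z'" unfolding z z' xn[symmetric] by (simp add: mult.assoc)
  then have eqU: "u0^n*v0^2 = x^(n*n+2) * (z'^n*w^2)" unfolding w
    by (simp add: power_mult_distrib power_mult power_add algebra_simps power2_eq_square)
  have "2*n \<le> n*n" using n by (simp add: mult_le_mono1)
  then have "2*n+1 \<le> n*n+2" by linarith
  then have "x^(2*n+1) dvd x^(n*n+2)" by (rule le_imp_power_dvd)
  then have "x^(2*n+1) dvd x^(n*n+2) * (z'^n*w^2)" by (rule dvd_mult2)
  then have "x^(2*n+1) dvd u0^n*v0^2" unfolding eqU .
  then have "x^(2*n+1) dvd u0^n*v0^2 - (u0^n*v0^2 - v0^(n+2))"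
    by (rule dvd_diff[OF _ h2[folded x_def]])
  then have "x^(2*n+1) dvd v0^(n+2)" by simp
  moreover have "v0^(n+2) = x^(n+2) * w^(n+2)" unfolding w by (simp add: power_mult_distrib)
  moreover have "x^(2*n+1) = x^(n+2) * x^(n-1)" proof -
    have "2*n+1 = (n+2) + (n-1)" using n by simp
    then show ?thesis by (metis power_add)
  qed
  ultimately have "x^(n-1) dvd w^(n+2)" using x0 by simp
  moreover have "x dvd x^(n-1)" using n by (intro dvd_power) auto
  ultimately have "x dvd w^(n+2)" by (rule dvd_trans[rotated])
  then have "poly (w^(n+2)) 0 = 0" by (simp add: x_def dvd_iff_poly_eq_0)
  then show False using w0 by (simp add: poly_power)
qed

lemma char_facts:
  assumes n: "n \<ge> 2" and ch: "CHAR('a::field) = 0 \<or> (coprime (CHAR('a)) n \<and> coprime (CHAR('a)) (n - 1))"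
  shows "(of_nat n :: 'a) \<noteq> 0" "(of_nat (n-1) :: 'a) \<noteq> 0" "(2 :: 'a) \<noteq> 0"
proof -
  have c1: "CHAR('a) \<noteq> 1" using of_nat_CHAR[where ?'a='a] by auto
  have key: "\<not> CHAR('a) dvd k" if "k \<noteq> 0" "CHAR('a) = 0 \<or> coprime (CHAR('a)) k" for k
  proof
    assume d: "CHAR('a) dvd k"
    from that(2) show False
    proof
      assume "CHAR('a) = 0" then show False using d that(1) by simp
    next
      assume "coprime (CHAR('a)) k"
      then have "is_unit (CHAR('a))" using d by (meson coprime_common_divisor dvd_refl)
      then show False using c1 by simp
    qed
  qed
  have "\<not> CHAR('a) dvd n" using key[of n] ch n by auto
  then show "(of_nat n :: 'a) \<noteq> 0" using of_nat_eq_0_iff_char_dvd by blast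
  have "\<not> CHAR('a) dvd (n-1)" using key[of "n-1"] ch n by auto
  then show "(of_nat (n-1) :: 'a) \<noteq> 0" using of_nat_eq_0_iff_char_dvd by blast
  show "(2 :: 'a) \<noteq> 0"
  proof
    assume "(2::'a) = 0"
    then have d2: "CHAR('a) dvd 2" using of_nat_eq_0_iff_char_dvd[of 2, where ?'a='a] by simp
    show False
    proof (cases "even n")
      case True
      then have "CHAR('a) dvd n" using d2 dvd_trans by blast
      then show False using key[of n] ch n by auto
    next
      case False
      then have "even (n-1)" using n by simp
      then have "CHAR('a) dvd (n-1)" using d2 dvd_trans by blast
      then show False using key[of "n-1"] ch n by auto
    qed
  qed
qed

lemma alg_final:
  fixes a d s e :: "'a::field"
  assumes n: "n \<ge> 2" and d0: "d \<noteq> 0" and N0: "(of_nat n :: 'a) \<noteq> 0" and N1: "(of_nat (n-1) :: 'a) \<noteq> 0"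
    and E1: "a^n * d^2 - d^(n+2) = 0"
    and E1': "a^(2*n+1) - a * d^(n+1) = 0"
    and E3: "of_nat n * a^(n-1) * s * d^2 + a^n * (2 * d * e) - of_nat (n+2) * d^(n+1) * e = 0"
    and E4: "of_nat (2*n+1) * a^(2*n) * s - (s * d^(n+1) + a * (of_nat (n+1) * d^n * e)) = 0"
  shows "e = 0"
proof -
  define N :: 'a where "N = of_nat n"
  define A1 where "A1 = a^(n-1)"
  define D1 where "D1 = d^(n-1)"
  have an: "a^n = a * A1" unfolding A1_def using n by (cases n) auto
  have dn: "d^n = d * D1" unfolding D1_def using n by (cases n) auto
  have "a^n * d^2 = d^n * d^2" using E1 by (simp add: power_add power2_eq_square)
  then have an2: "a^n = d^n" using d0 by simp
  have a0: "a \<noteq> 0" using an2 d0 by (metis n power_0_left power_eq_0_iff not_numeral_le_zero)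
  have "a * a^(2*n) = a * d^(n+1)" using E1' by simp
  then have a2n: "a^(2*n) = d^(n+1)" using a0 by simp
  have "d^(n+1) * D1 = d^(n+1) * 1"
  proof -
    have "2*n = (n+1) + (n-1)" using n by simp
    then have "d^(n+1) * D1 = d^(2*n)" unfolding D1_def by (metis power_add)
    also have "\<dots> = (d^n)^2" by (simp add: power_mult[symmetric] mult.commute)
    also have "\<dots> = (a^n)^2" by (simp add: an2)
    also have "\<dots> = a^(2*n)" by (simp add: power_mult[symmetric] mult.commute)
    finally show ?thesis using a2n by simp
  qed
  then have D1: "D1 = 1" using d0 by simp
  have dn': "d^n = d" using dn D1 by simp
  have dn1: "d^(n+1) = d^2" using dn' by (simp add: power2_eq_square)
  have aA: "a * A1 = d" using an an2 dn' by simp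
  have dn2: "d^(n+2) = d^3" using dn' by (simp add: eval_nat_numeral)
  have N2: "(of_nat (n+2) :: 'a) = N + 2" "(of_nat (n+1) :: 'a) = N + 1" "(of_nat (2*n+1) :: 'a) = 2*N + 1"
    "(of_nat (n-1) :: 'a) = N - 1"
    unfolding N_def using n by (simp_all add: of_nat_diff)
  have e3: "N * d^2 * (A1 * s - e) = 0"
    using E3 unfolding N_def[symmetric] N2 A1_def[symmetric] dn1 an aA
    by (simp add: algebra_simps power2_eq_square)
  then have As: "A1 * s = e" using N0 d0 unfolding N_def by simp
  have e4: "d * (2*N*d*s - (N+1)*a*e) = 0"
    using E4 unfolding N2 a2n dn1 dn' by (simp add: algebra_simps power2_eq_square)
  then have "2*N*d*s = (N+1)*a*e" using d0 by simp
  then have "2*N*d*(A1*s) = (N+1)*(a*A1)*e" by (metis mult.assoc mult.left_commute)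
  then have "2*N*d*e = (N+1)*d*e" unfolding As aA .
  then have "(N - 1) * d * e = 0" by (simp add: algebra_simps)
  moreover have "N - 1 \<noteq> 0" using N1 N2(4) by simp
  ultimately show "e = 0" using d0 by simp
qed

lemma coeff0_Xpow: "coeff (Xv ^ k * h) 0 = [:0,1:]^k * coeff h 0"
  by (simp add: Xv_pow const_mult_poly monom_altdef)
lemma coeff0_X: "coeff (Xv * h) 0 = [:0,1:] * coeff h 0"
  using coeff0_Xpow[of 1 h] by simp
lemma coeff0_Ypow: "coeff (Yv ^ k * h) 0 = (if k = 0 then coeff h 0 else 0)"
  by (simp add: Yv_pow coeff_monom_mult)

lemma In_coeff0: assumes "P \<in> In n" shows "[:0,1:]^(2*n+1) dvd coeff P 0"
proof -
  obtain a b c where P: "P = Yv^(2*n+3)*a + Xv^n*(Yv^2*b) - Yv^(n+2)*b + Xv^(2*n+1)*c - Xv*(Yv^(n+1)*c)"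
    using assms(1) by (rule In_form)
  have "coeff P 0 = [:0,1:]^(2*n+1) * coeff c 0"
    unfolding P coeff_add coeff_diff coeff0_Xpow coeff0_X coeff0_Ypow by simp
  then show ?thesis by (metis dvd_triv_left)
qed

lemma keylemma:
  fixes u v :: "'a::field poly poly"
  assumes n: "n \<ge> 2" and ch: "CHAR('a) = 0 \<or> (coprime (CHAR('a)) n \<and> coprime (CHAR('a)) (n - 1))"
    and R2: "u^n*v^2 - v^(n+2) \<in> In n" and R3: "u^(2*n+1) - u*v^(n+1) \<in> In n"
    and Rv: "v^(2*n+3) \<in> In n"
  shows "\<exists>\<kappa>. v^(2*n+1) - cst \<kappa> * Yv^(2*n+1) \<in> In n"
proof -
  have "ev0 v ^ (2*n+3) = 0" using ev0_In[OF Rv] by (simp add: ev0_pow)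
  then have ev0v: "ev0 v = 0" by simp
  have "ev0 u ^ (2*n+1) = 0" using ev0_In[OF R3] ev0v by (simp add: ev0_pow ev0_mult ev0_diff)
  then have ev0u: "ev0 u = 0" by auto
  have c0: "cf v 1 0 = 0"
  proof -
    have h3: "[:0,1:]^(2*n+1) dvd (coeff u 0)^(2*n+1) - coeff u 0 * (coeff v 0)^(n+1)"
      using In_coeff0[OF R3] by (simp add: coeff_0_power coeff_mult_0)
    have h2: "[:0,1:]^(2*n+1) dvd (coeff u 0)^n * (coeff v 0)^2 - (coeff v 0)^(n+2)"
      using In_coeff0[OF R2] by (simp add: coeff_0_power coeff_mult_0)
    have "coeff (coeff v 0) 1 = 0"
      by (rule uni[OF n _ _ h3 h2]) (use ev0u ev0v in \<open>simp_all add: ev0_def cf_def\<close>)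
    then show ?thesis by (simp add: cf_def)
  qed
  obtain \<alpha> \<beta> where u1: "u = Xv*\<alpha> + Yv*\<beta>" using ev0u by (rule dec)
  obtain \<gamma> \<delta>0 where v1: "v = Xv*\<gamma> + Yv*\<delta>0" using ev0v by (rule dec)
  have "ev0 \<gamma> = 0" using c0 unfolding v1 by (simp add: ev0_def)
  then obtain \<epsilon> \<gamma>1 where g: "\<gamma> = Xv*\<epsilon> + Yv*\<gamma>1" by (rule dec)
  define \<delta> where "\<delta> = \<delta>0 + Xv*\<gamma>1"
  have v2: "v = Xv^2*\<epsilon> + Yv*\<delta>" unfolding v1 g \<delta>_def by (simp add: algebra_simps power2_eq_square)
  show ?thesis
  proof (cases "ev0 \<delta> = 0")
    case True
    have "v^(2*n+1) \<in> In n" using stepZ0[OF n v2 True] .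
    then show ?thesis by (intro exI[of _ 0]) simp
  next
    case False
    have "ev0 \<beta> * ev0 \<delta>^(n+1) = 0" using stepB[OF n R3 u1 v2] .
    then have "ev0 \<beta> = 0" using False by simp
    then obtain \<beta>1 \<beta>2 where b: "\<beta> = Xv*\<beta>1 + Yv*\<beta>2" by (rule dec)
    define \<alpha>' where "\<alpha>' = \<alpha> + Yv*\<beta>1"
    have u2: "u = Xv*\<alpha>' + Yv^2*\<beta>2" unfolding u1 b \<alpha>'_def by (simp add: algebra_simps power2_eq_square)
    have E1: "ev0 \<alpha>'^n * ev0 \<delta>^2 - ev0 \<delta>^(n+2) = 0" using stepE1[OF n R2 u2 v2] .
    have E1': "ev0 \<alpha>'^(2*n+1) - ev0 \<alpha>' * ev0 \<delta>^(n+1) = 0" using stepE1'[OF n R3 u2 v2] .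
    have E2: "2 * ev0 \<alpha>'^n * ev0 \<epsilon> * ev0 \<delta> = 0" using stepE2[OF n R2 u2 v2] .
    have eqa: "ev0 \<alpha>'^n * ev0 \<delta>^2 = ev0 \<delta>^(n+2)" using E1 by simp
    have "ev0 \<delta>^(n+2) \<noteq> 0" using False by simp
    then have "ev0 \<alpha>'^n \<noteq> 0" using eqa by (metis mult_zero_left)
    moreover have "(2::'a) \<noteq> 0" using char_facts[OF n ch] by simp
    ultimately have "ev0 \<epsilon> = 0" using E2 False by auto
    then obtain \<epsilon>1 \<epsilon>2 where ee: "\<epsilon> = Xv*\<epsilon>1 + Yv*\<epsilon>2" by (rule dec)
    define \<delta>' where "\<delta>' = \<delta> + Xv^2*\<epsilon>2"
    have v3: "v = Xv^3*\<epsilon>1 + Yv*\<delta>'" unfolding v2 ee \<delta>'_def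
      by (simp add: algebra_simps power2_eq_square eval_nat_numeral)
    have dd: "ev0 \<delta>' = ev0 \<delta>" unfolding \<delta>'_def by (simp add: ev0_def)
    have E3: "of_nat n * ev0 \<alpha>'^(n-1) * D \<alpha>' * ev0 \<delta>^2 + ev0 \<alpha>'^n * (2 * ev0 \<delta> * D \<delta>')
        - of_nat (n+2) * ev0 \<delta>^(n+1) * D \<delta>' = 0"
    proof -
      have D1: "D (\<alpha>'^n * \<delta>'^2) = of_nat n * ev0 \<alpha>'^(n-1) * D \<alpha>' * ev0 \<delta>^2 + ev0 \<alpha>'^n * (2 * ev0 \<delta> * D \<delta>')"
        unfolding D_mult D_pow ev0_pow dd by simp
      have D2: "D (\<delta>'^(n+2)) = of_nat (n+2) * ev0 \<delta>^(n+1) * D \<delta>'"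
        unfolding D_pow dd by simp
      show ?thesis using stepE3[OF n R2 u2 v3] unfolding D1 D2 .
    qed
    have E4: "of_nat (2*n+1) * ev0 \<alpha>'^(2*n) * D \<alpha>'
        - (D \<alpha>' * ev0 \<delta>^(n+1) + ev0 \<alpha>' * (of_nat (n+1) * ev0 \<delta>^n * D \<delta>')) = 0"
    proof -
      have D1: "D (\<alpha>'^(2*n+1)) = of_nat (2*n+1) * ev0 \<alpha>'^(2*n) * D \<alpha>'"
        unfolding D_pow by simp
      have D2: "D (\<alpha>' * \<delta>'^(n+1)) = D \<alpha>' * ev0 \<delta>^(n+1) + ev0 \<alpha>' * (of_nat (n+1) * ev0 \<delta>^n * D \<delta>')"
        unfolding D_mult D_pow ev0_pow dd by simp
      show ?thesis using stepE4[OF n R3 u2 v3] unfolding D1 D2 .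
    qed
    have "D \<delta>' = 0"
      by (rule alg_final[OF n False char_facts(1,2)[OF n ch] E1 E1' E3 E4])
    then have "v^(2*n+1) - cst (ev0 \<delta>' ^ (2*n+1)) * Yv^(2*n+1) \<in> In n" by (rule stepF[OF n v3])
    then show ?thesis by blast
  qed
qed

lemma cst_add: "cst (a + b) = cst a + cst b" by (simp add: cst_def)
lemma cst_minus: "cst (- a) = - cst a" by (simp add: cst_def)

lemma aut_pow:
  assumes "induces_aut n f" shows "f (p^k) - (f p)^k \<in> In n"
proof (induction k)
  case 0 then show ?case using assms by (simp add: induces_aut_def)
next
  case (Suc k)
  have m: "f (p * p^k) - f p * f (p^k) \<in> In n" using assms by (simp add: induces_aut_def)
  have "f p * f (p^k) - f p * (f p)^k \<in> In n"
    using In_mult[OF Suc.IH, of "f p"] by (simp add: algebra_simps)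
  then have "(f (p * p^k) - f p * f (p^k)) + (f p * f (p^k) - f p * (f p)^k) \<in> In n"
    by (rule In_add[OF m])
  then show ?case by simp
qed

lemma aut_prod:
  assumes "induces_aut n f" "f p - P \<in> In n" "f q - Q \<in> In n" shows "f (p*q) - P*Q \<in> In n"
proof -
  have m: "f (p * q) - f p * f q \<in> In n" using assms(1) by (simp add: induces_aut_def)
  have eq: "f (p*q) - P*Q = (f (p * q) - f p * f q) + f p * (f q - Q) + (f p - P) * Q"
    by (simp add: algebra_simps)
  show ?thesis unfolding eq by (rule In_add[OF In_add[OF m In_mult[OF assms(3)]] In_mult2[OF assms(2)]])
qed

theorem corollary1p2:
  fixes n :: nat and U1 U2 :: "'a::field poly poly set"
  assumes "n \<ge> 2"
    and "CHAR('a) = 0 \<or> (coprime (CHAR('a)) n \<and> coprime (CHAR('a)) (n - 1))"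
    and "compl_hyperplane n U1" and "compl_hyperplane n U2"
    and "Yv ^ (2*n+1) \<in> U1" and "Yv ^ (2*n+1) \<notin> U2"
  shows "\<not> (\<exists>f. induces_aut n f \<and> maps_onto n f U1 U2)"
proof
  assume "\<exists>f. induces_aut n f \<and> maps_onto n f U1 U2"
  then obtain f where fa: "induces_aut n f" and fm: "maps_onto n f U1 U2" by blast
  note n = assms(1)
  define u where "u = f Xv"
  define v where "v = f Yv"
  have resp: "\<And>p q. p - q \<in> In n \<Longrightarrow> f p - f q \<in> In n" using fa unfolding induces_aut_def by blast
  have inj: "\<And>p q. f p - f q \<in> In n \<Longrightarrow> p - q \<in> In n" using fa unfolding induces_aut_def by blast
  have "f (0 + 0) - (f 0 + f 0) \<in> In n" using fa unfolding induces_aut_def by blast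
  then have "- f 0 \<in> In n" by simp
  then have f0: "f 0 \<in> In n" using In_uminus[of "- f 0" n] by simp
  have fY: "\<And>k. f (Yv^k) - v^k \<in> In n" unfolding v_def by (rule aut_pow[OF fa])
  have fX: "\<And>k. f (Xv^k) - u^k \<in> In n" unfolding u_def by (rule aut_pow[OF fa])
  have fX1: "f Xv - u \<in> In n" by (simp add: u_def In_0)
  have R2: "u^n*v^2 - v^(n+2) \<in> In n"
  proof -
    have a: "f (Xv^n*Yv^2) - u^n*v^2 \<in> In n" by (rule aut_prod[OF fa fX fY])
    have b: "f (Xv^n*Yv^2) - f (Yv^(n+2)) \<in> In n" by (rule resp[OF In_g2])
    have eq: "u^n*v^2 - v^(n+2) = (f (Xv^n*Yv^2) - f (Yv^(n+2))) - (f (Xv^n*Yv^2) - u^n*v^2) + (f (Yv^(n+2)) - v^(n+2))"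
      by simp
    show ?thesis unfolding eq by (rule In_add[OF In_diff[OF b a] fY])
  qed
  have R3: "u^(2*n+1) - u*v^(n+1) \<in> In n"
  proof -
    have a: "f (Xv*Yv^(n+1)) - u*v^(n+1) \<in> In n" by (rule aut_prod[OF fa fX1 fY])
    have b: "f (Xv^(2*n+1)) - f (Xv*Yv^(n+1)) \<in> In n" by (rule resp[OF In_g3])
    have eq: "u^(2*n+1) - u*v^(n+1) = (f (Xv^(2*n+1)) - f (Xv*Yv^(n+1))) - (f (Xv^(2*n+1)) - u^(2*n+1)) + (f (Xv*Yv^(n+1)) - u*v^(n+1))"
      by simp
    show ?thesis unfolding eq by (rule In_add[OF In_diff[OF b fX] a])
  qed
  have Rv: "v^(2*n+3) \<in> In n"
  proof -
    have b: "f (Yv^(2*n+3)) - f 0 \<in> In n" by (rule resp) (simp add: In_g1)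
    have eq: "v^(2*n+3) = (f (Yv^(2*n+3)) - f 0) + f 0 - (f (Yv^(2*n+3)) - v^(2*n+3))" by simp
    show ?thesis by (subst eq) (rule In_diff[OF In_add[OF b f0] fY])
  qed
  obtain \<kappa> where k: "v^(2*n+1) - cst \<kappa> * Yv^(2*n+1) \<in> In n"
    using keylemma[OF n assms(2) R2 R3 Rv] by blast
  define F where "F = f (Yv^(2*n+1))"
  have G: "F - cst \<kappa> * Yv^(2*n+1) \<in> In n"
  proof -
    have eq: "F - cst \<kappa> * Yv^(2*n+1) = (F - v^(2*n+1)) + (v^(2*n+1) - cst \<kappa> * Yv^(2*n+1))" by simp
    show ?thesis unfolding eq unfolding F_def by (rule In_add[OF fY k])
  qed
  have FU: "F \<in> U2" using fm assms(5) unfolding maps_onto_def F_def by blast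
  have U2: "lin_subspace U2" "In n \<subseteq> U2" using assms(4) unfolding compl_hyperplane_def by blast+
  have add: "\<And>p q. p \<in> U2 \<Longrightarrow> q \<in> U2 \<Longrightarrow> p + q \<in> U2"
    and sc: "\<And>c p. p \<in> U2 \<Longrightarrow> cst c * p \<in> U2" using U2(1) unfolding lin_subspace_def by blast+
  show False
  proof (cases "\<kappa> = 0")
    case True
    then have "F \<in> In n" using G by simp
    then have "F - f 0 \<in> In n" using In_diff f0 by blast
    then have "(Yv::'a poly poly)^(2*n+1) - 0 \<in> In n" unfolding F_def by (rule inj)
    then have "Yv^(2*n+1) \<in> U2" using U2(2) by auto
    then show False using assms(6) by simp
  next
    case False
    have eqY: "Yv^(2*n+1) = cst (1/\<kappa>) * F + cst (-(1/\<kappa>)) * (F - cst \<kappa> * Yv^(2*n+1))"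
    proof -
      have c1: "cst (1/\<kappa>) * cst \<kappa> = 1" using False by (simp add: cst_mult[symmetric])
      have "cst (1/\<kappa>) * F + cst (-(1/\<kappa>)) * (F - cst \<kappa> * Yv^(2*n+1))
          = (cst (1/\<kappa>) * cst \<kappa>) * Yv^(2*n+1)"
        by (simp add: cst_minus algebra_simps)
      then show ?thesis unfolding c1 by simp
    qed
    have m1: "cst (1/\<kappa>) * F \<in> U2" by (rule sc[OF FU])
    have m2: "cst (-(1/\<kappa>)) * (F - cst \<kappa> * Yv^(2*n+1)) \<in> U2" using sc U2(2) G by blast
    have "Yv^(2*n+1) \<in> U2" by (subst eqY) (rule add[OF m1 m2])
    then show False using assms(6) by simp
  qed
qed

end
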